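(* Let $\mathbf{K}_{\mathbf{x}\mathbf{x}}\in\mathbb{R}^{K\times K}$ be a (symmetric positive semidefinite) covariance matrix. For any $d>0$ and any full-rank $\mathbf{A}\in\mathbb{Z}^{K\times K}$ with rows $\mathbf{a}_1^T,\ldots,\mathbf{a}_K^T$, $$\frac{1}{2}\log_2\Big(\max_{k=1,\ldots,K}\mathbf{a}_k^T\big(\mathbf{I}+\tfrac1d\mathbf{K}_{\mathbf{x}\mathbf{x}}\big)\mathbf{a}_k\Big)\ \ge\ \frac{1}{2K}\log_2\Big|\det\big(\mathbf{I}+\tfrac1d\mathbf{K}_{\mathbf{x}\mathbf{x}}\big)\Big|.$$ In particular, $R_{\text{IF}}(d)\ge R^{\text{BT}}_{\text{bench}}(d)$, where $R_{\text{IF}}(d)$ is the minimum of the left-hand side over full-rank integer $\mathbf{A}$ and $R^{\text{BT}}_{\text{bench}}(d)$ is the right-hand side. *)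

theory Defs
  imports "HOL-Analysis.Analysis"
begin

definition integer_matrix :: "real^'n^'m \<Rightarrow> bool" where
  "integer_matrix A \<longleftrightarrow> (\<forall>i j. A $ i $ j \<in> \<int>)"

definition psd_matrix :: "real^'n^'n \<Rightarrow> bool" where
  "psd_matrix M \<longleftrightarrow> transpose M = M \<and> (\<forall>x. 0 \<le> x \<bullet> (M *v x))"

definition if_rate_A :: "real^'n^'n \<Rightarrow> real \<Rightarrow> real^'n^'n \<Rightarrow> real" where
  "if_rate_A Kxx d A =
     1/2 * log 2 (Max (range (\<lambda>k. row k A \<bullet> ((mat 1 + (1/d) *\<^sub>R Kxx) *v row k A))))"

definition R_IF :: "real^'n^'n \<Rightarrow> real \<Rightarrow> real" where
  "R_IF Kxx d = Inf {if_rate_A Kxx d A | A. integer_matrix A \<and> rank A = CARD('n)}"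

definition R_bench_BT :: "real^'n^'n \<Rightarrow> real \<Rightarrow> real" where
  "R_bench_BT Kxx d = 1 / (2 * real CARD('n)) * log 2 \<bar>det (mat 1 + (1/d) *\<^sub>R Kxx)\<bar>"

end

theory Submission
  imports Defs
begin

lemma entry_WMWt:
  fixes W M :: "real^'n^'n"
  shows "(W ** M ** transpose W) $ i $ j = (W$i) \<bullet> (M *v (W$j))"
proof -
  have "(W ** M ** transpose W) $ i $ j = (\<Sum>k\<in>UNIV. (\<Sum>l\<in>UNIV. W$i$l * M$l$k) * W$j$k)"
    by (simp add: matrix_matrix_mult_def transpose_def)
  also have "\<dots> = (\<Sum>k\<in>UNIV. \<Sum>l\<in>UNIV. W$i$l * (M$l$k * W$j$k))"
    by (simp add: sum_distrib_right mult.assoc)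
  also have "\<dots> = (\<Sum>l\<in>UNIV. \<Sum>k\<in>UNIV. W$i$l * (M$l$k * W$j$k))"
    by (rule sum.swap)
  also have "\<dots> = (W$i) \<bullet> (M *v (W$j))"
    by (simp add: inner_vec_def matrix_vector_mult_def sum_distrib_left)
  finally show ?thesis .
qed

lemma sym_ip:
  fixes M :: "real^'n^'n"
  assumes "transpose M = M"
  shows "x \<bullet> (M *v y) = y \<bullet> (M *v x)"
  by (metis assms dot_lmul_matrix vector_transpose_matrix inner_commute)

lemma det_cont: "continuous_on S (det :: real^'n^'n \<Rightarrow> real)"
  unfolding det_def by (intro continuous_intros)


lemma row_eq_nth: "row i (A::'a^'n^'m) = A $ i"
  by (simp add: row_def vec_eq_iff)

lemma smult_eq_scaleR: "(c::real) *s (x::real^'n) = c *\<^sub>R x"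
  by (simp add: vec_eq_iff)

locale hadM =
  fixes M :: "real^'n^'n"
  assumes sym: "transpose M = M" and pos: "\<And>x. x \<bullet> x \<le> x \<bullet> (M *v x)"
begin

definition q :: "real^'n \<Rightarrow> real" where "q x = x \<bullet> (M *v x)"
definition U :: "(real^'n^'n) set" where "U = {W. \<forall>i. q (W$i) = 1}"

lemma q_nonneg: "0 \<le> q x"
  using pos[of x] unfolding q_def by (meson inner_ge_zero order_trans)

lemma q_scale: "q (c *\<^sub>R x) = c^2 * q x"
  by (simp add: q_def matrix_vector_mult_scaleR power2_eq_square)

lemma q_pos: "x \<noteq> 0 \<Longrightarrow> 0 < q x"
  using pos[of x] unfolding q_def by (meson inner_gt_zero_iff order_less_le_trans)

lemma normalize:
  fixes V :: "real^'n^'n"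
  assumes nz: "\<And>i. V$i \<noteq> 0"
  defines "W \<equiv> (\<chi> i. (1 / sqrt (q (V$i))) *\<^sub>R V$i)"
  shows "W \<in> U" and "det V = (\<Prod>i\<in>UNIV. sqrt (q (V$i))) * det W"
proof -
  have qq: "\<forall>i. q (V$i) \<noteq> 0 \<and> 0 \<le> q (V$i)" using q_pos[OF nz] by (metis less_imp_le less_irrefl)
  then show "W \<in> U"
    unfolding U_def W_def
    by (simp add: q_scale power_divide)
  have "V = (\<chi> i. sqrt (q (V$i)) *s W$i)"
    using qq unfolding W_def by (simp add: vec_eq_iff smult_eq_scaleR)
  then have "det V = det (\<chi> i. sqrt (q (V$i)) *s W$i)" by simp
  also have "\<dots> = (\<Prod>i\<in>UNIV. sqrt (q (V$i))) * det (\<chi> i. W$i)"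
    by (rule det_rows_mul)
  also have "(\<chi> i. W$i) = W" by (simp add: vec_eq_iff)
  finally show "det V = (\<Prod>i\<in>UNIV. sqrt (q (V$i))) * det W" .
qed

lemma cont_q: "continuous_on S (\<lambda>W::real^'n^'n. q (W$i))"
  unfolding q_def
  by (intro continuous_intros continuous_on_compose2[OF matrix_vector_mult_linear_continuous_on, where t=UNIV]) auto

lemma compact_U: "compact U"
proof (rule compact_eq_bounded_closed[THEN iffD2], rule conjI)
  show "bounded U"
  proof (rule boundedI)
    fix W assume W: "W \<in> U"
    have n1: "norm (W$i) \<le> 1" for i
    proof -
      have "norm (W$i)^2 \<le> 1" using pos[of "W$i"] W
        by (simp add: U_def q_def power2_norm_eq_inner)
      then show ?thesis by (simp add: power_le_one_iff abs_square_le_1)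
    qed
    have "norm W = L2_set (\<lambda>i. norm (W$i)) UNIV" by (rule norm_vec_def)
    also have "\<dots> \<le> (\<Sum>i\<in>UNIV. norm (W$i))" by (rule L2_set_le_sum) simp
    also have "\<dots> \<le> (\<Sum>i\<in>(UNIV::'n set). 1)" by (rule sum_mono) (rule n1)
    finally show "norm W \<le> real CARD('n)" by simp
  qed
  have "U = (\<Inter>i. {W. q (W$i) = 1})" unfolding U_def by auto
  moreover have "closed {W::real^'n^'n. q (W$i) = 1}" for i
    by (rule closed_Collect_eq) (auto intro: cont_q continuous_intros)
  ultimately show "closed U" by auto
qed

lemma det_mat1_norm: "\<exists>W\<in>U. det W \<noteq> 0"
proof -
  have nz: "(mat 1 :: real^'n^'n) $ i \<noteq> 0" for i
    by (simp add: vec_eq_iff mat_def)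
  from normalize[OF nz] show ?thesis by force
qed

lemma maximizer:
  obtains W0 where "W0 \<in> U" "\<And>W. W \<in> U \<Longrightarrow> \<bar>det W\<bar> \<le> \<bar>det W0\<bar>" "det W0 \<noteq> 0"
proof -
  have "U \<noteq> {}" using det_mat1_norm by blast
  from continuous_attains_sup[OF compact_U this, of "\<lambda>W. \<bar>det W\<bar>"]
  obtain W0 where W0: "W0 \<in> U" "\<And>W. W \<in> U \<Longrightarrow> \<bar>det W\<bar> \<le> \<bar>det W0\<bar>"
    by (auto intro: continuous_intros det_cont)
  moreover have "det W0 \<noteq> 0" using det_mat1_norm W0(2) by force
  ultimately show ?thesis using that by blast
qed

lemma orth:
  assumes W0: "W0 \<in> U" "\<And>W. W \<in> U \<Longrightarrow> \<bar>det W\<bar> \<le> \<bar>det W0\<bar>" "det W0 \<noteq> 0"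
    and ij: "i \<noteq> j"
  shows "W0$i \<bullet> (M *v W0$j) = 0"
proof (rule ccontr)
  define c where "c = W0$i \<bullet> (M *v W0$j)"
  assume "W0$i \<bullet> (M *v W0$j) \<noteq> 0"
  then have c0: "c \<noteq> 0" by (simp add: c_def)
  define u where "u = W0$i - c *\<^sub>R W0$j"
  have qi: "q (W0$i) = 1" and qj: "q (W0$j) = 1" using W0(1) by (auto simp: U_def)
  have c': "W0$j \<bullet> (M *v W0$i) = c" using sym_ip[OF sym] by (simp add: c_def)
  have "q u = q (W0$i) - c * (W0$i \<bullet> (M *v W0$j)) - c * (W0$j \<bullet> (M *v W0$i)) + c*c*q (W0$j)"
    by (simp add: u_def q_def matrix_vector_mult_diff_distrib matrix_vector_mult_scaleR
        inner_diff_left inner_diff_right algebra_simps)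
  then have qu: "q u = 1 - c^2" using qi qj c' by (simp add: c_def power2_eq_square)
  define W1 where "W1 = (\<chi> k. if k = i then u else W0$k)"
  have "W1 = (\<chi> k. if k = i then row i W0 + (-c) *s row j W0 else row k W0)"
    by (simp add: W1_def u_def vec_eq_iff row_eq_nth smult_eq_scaleR)
  then have dW1: "det W1 = det W0" using det_row_operation[OF ij, of W0 "-c"] by simp
  show False
  proof (cases "q u \<le> 0")
    case True
    then have "u \<bullet> u \<le> 0" using pos[of u] by (simp add: q_def)
    then have "u = 0" by (metis inner_eq_zero_iff inner_ge_zero order_antisym)
    then have "row i W1 = 0" by (simp add: W1_def row_eq_nth)
    then have "det W1 = 0" by (rule det_zero_row)
    with dW1 W0(3) show False by simp
  next
    case False
    define s where "s = sqrt (1 - c^2)"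
    have s0: "0 < s" using False qu by (simp add: s_def)
    have "c^2 > 0" using c0 by simp
    then have s1: "s < 1" using False qu by (simp add: s_def)
    define W2 where "W2 = (\<chi> k. if k = i then (1/s) *s u else W0$k)"
    have "det W2 = (1/s) * det (\<chi> k. if k = i then u else W0$k)"
      unfolding W2_def by (rule det_row_mul)
    then have dW2: "det W2 = det W0 / s" using dW1 by (simp add: W1_def)
    have "W2 \<in> U"
    proof -
      have "q ((1/s) *\<^sub>R u) = 1" using s0 qu False
        by (simp add: q_scale s_def power_divide)
      then show ?thesis using W0(1) by (auto simp: U_def W2_def smult_eq_scaleR)
    qed
    then have "\<bar>det W2\<bar> \<le> \<bar>det W0\<bar>" by (rule W0(2))
    moreover have "\<bar>det W0\<bar> < \<bar>det W2\<bar>"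
    proof -
      have a: "0 < \<bar>det W0\<bar>" using W0(3) by simp
      have "\<bar>det W0\<bar> * s < \<bar>det W0\<bar>" using mult_strict_left_mono[OF s1 a] by simp
      then have "\<bar>det W0\<bar> < \<bar>det W0\<bar> / s" using s0 by (simp add: less_divide_eq)
      then show ?thesis using dW2 s0 by (simp add: abs_divide)
    qed
    ultimately show False by simp
  qed
qed

lemma detM_and_bound:
  shows "0 < det M" and "\<And>W. W \<in> U \<Longrightarrow> (det W)^2 * det M \<le> 1"
proof -
  obtain W0 where W0: "W0 \<in> U" "\<And>W. W \<in> U \<Longrightarrow> \<bar>det W\<bar> \<le> \<bar>det W0\<bar>" "det W0 \<noteq> 0"
    using maximizer by blast
  have "W0 ** M ** transpose W0 = mat 1"
  proof -
    have "(W0 ** M ** transpose W0) $ i $ j = (mat 1 :: real^'n^'n) $ i $ j" for i j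
    proof (cases "i = j")
      case True
      then show ?thesis using W0(1) by (simp add: entry_WMWt mat_def U_def q_def)
    next
      case False
      then show ?thesis using orth[OF W0 False] by (simp add: entry_WMWt mat_def)
    qed
    then show ?thesis by (simp add: vec_eq_iff)
  qed
  then have "det (W0 ** M ** transpose W0) = 1" by simp
  then have e: "(det W0)^2 * det M = 1" by (simp add: det_mul power2_eq_square algebra_simps)
  then show "0 < det M"
    by (metis W0(3) zero_less_one power2_eq_square zero_less_mult_pos not_square_less_zero
        zero_less_power2 zero_less_mult_iff)
  fix W assume "W \<in> U"
  then have "\<bar>det W\<bar> \<le> \<bar>det W0\<bar>" by (rule W0(2))
  then have "(det W)^2 \<le> (det W0)^2" by (simp add: abs_le_square_iff)
  then have "(det W)^2 * det M \<le> (det W0)^2 * det M" using \<open>0 < det M\<close> by simp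
  then show "(det W)^2 * det M \<le> 1" using e by simp
qed

lemma hadamard: "(det V)^2 * det M \<le> (\<Prod>i\<in>UNIV. q (V$i))"
proof (cases "\<exists>i. V$i = 0")
  case True
  then obtain i where "V$i = 0" by blast
  then have "det V = 0" by (intro det_zero_row(1)[of i]) (simp add: row_eq_nth)
  then show ?thesis by (simp add: prod_nonneg q_nonneg)
next
  case False
  then have nz: "\<And>i. V$i \<noteq> 0" by blast
  define W where "W \<equiv> (\<chi> i. (1 / sqrt (q (V$i))) *\<^sub>R V$i)"
  have WU: "W \<in> U" and dV: "det V = (\<Prod>i\<in>UNIV. sqrt (q (V$i))) * det W"
    using normalize[OF nz] unfolding W_def by auto
  have P: "(\<Prod>i\<in>UNIV. sqrt (q (V$i)))^2 = (\<Prod>i\<in>UNIV. q (V$i))"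
    by (simp add: prod_power_distrib q_nonneg)
  have "(det V)^2 * det M = (\<Prod>i\<in>UNIV. q (V$i)) * ((det W)^2 * det M)"
    by (simp add: dV power_mult_distrib P)
  also have "\<dots> \<le> (\<Prod>i\<in>UNIV. q (V$i)) * 1"
    by (rule mult_left_mono[OF detM_and_bound(2)[OF WU]]) (simp add: prod_nonneg q_nonneg)
  finally show ?thesis by simp
qed

end

lemma det_Ints:
  fixes A :: "real^'n^'n"
  assumes "integer_matrix A"
  shows "det A \<in> \<int>"
proof -
  have s: "of_int (sign p) \<in> (\<int>::real set)" for p :: "'n \<Rightarrow> 'n" by simp
  show ?thesis unfolding det_def
    using assms unfolding integer_matrix_def
    by (intro Ints_sum Ints_mult Ints_prod) (auto simp: sign_def)
qed

lemma main_ineq: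
  fixes Kxx A :: "real^'n^'n" and d :: real
  assumes psd: "psd_matrix Kxx" and d: "d > 0"
    and A: "integer_matrix A" "rank A = CARD('n)"
  shows "1/2 * log 2 (Max (range (\<lambda>k. row k A \<bullet> ((mat 1 + (1/d) *\<^sub>R Kxx) *v row k A))))
            \<ge> 1 / (2 * real CARD('n)) * log 2 \<bar>det (mat 1 + (1/d) *\<^sub>R Kxx)\<bar>"
proof -
  define M where "M = mat 1 + (1/d) *\<^sub>R Kxx"
  have symK: "transpose Kxx = Kxx" and psdK: "\<And>x. 0 \<le> x \<bullet> (Kxx *v x)"
    using psd by (auto simp: psd_matrix_def)
  have Kij: "Kxx $ j $ i = Kxx $ i $ j" for i j
    using arg_cong[OF symK, of "\<lambda>B. B $ i $ j"] by (simp add: transpose_def)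
  have symM: "transpose M = M"
    by (simp add: M_def vec_eq_iff transpose_def mat_def Kij)
  have posM: "x \<bullet> x \<le> x \<bullet> (M *v x)" for x
  proof -
    have "x \<bullet> (M *v x) = x \<bullet> x + (1/d) * (x \<bullet> (Kxx *v x))"
      by (simp add: M_def matrix_vector_mult_add_rdistrib scaleR_matrix_vector_assoc[symmetric] inner_add_right)
    moreover have "0 \<le> (1/d) * (x \<bullet> (Kxx *v x))" using d psdK[of x] by simp
    ultimately show ?thesis by simp
  qed
  interpret hadM M using symM posM by unfold_locales auto
  define Q where "Q = Max (range (\<lambda>k. row k A \<bullet> (M *v row k A)))"
  have qQ: "q (A$k) \<le> Q" for k
    unfolding Q_def q_def row_eq_nth by (rule Max_ge) auto
  have dA: "det A \<noteq> 0" using A(2) det_eq_0_rank[of A] by simp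
  have "1 \<le> \<bar>det A\<bar>" using det_Ints[OF A(1)] dA by (rule Ints_nonzero_abs_ge1)
  then have dA2: "1 \<le> (det A)^2" by (metis abs_le_square_iff abs_one one_power2)
  have dM: "0 < det M" by (rule detM_and_bound(1))
  have "det M \<le> (det A)^2 * det M" using dA2 dM by simp
  also have "\<dots> \<le> (\<Prod>i\<in>UNIV. q (A$i))" by (rule hadamard)
  also have "\<dots> \<le> (\<Prod>i\<in>(UNIV::'n set). Q)"
    by (rule prod_mono) (simp add: q_nonneg qQ)
  also have "\<dots> = Q ^ CARD('n)" by simp
  finally have le: "det M \<le> Q ^ CARD('n)" .
  have Q0: "0 < Q"
  proof -
    have "0 \<le> Q" using qQ q_nonneg order_trans by blast
    moreover have "Q \<noteq> 0"
    proof
      assume "Q = 0"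
      then have z: "Q ^ CARD('n) = 0" by (simp add: zero_power)
      show False using le dM z by linarith
    qed
    ultimately show ?thesis by simp
  qed
  have "log 2 (det M) \<le> log 2 (Q ^ CARD('n))"
    using le dM by simp
  also have "\<dots> = real CARD('n) * log 2 Q" using Q0 by (simp add: log_nat_power)
  finally have L: "log 2 (det M) \<le> real CARD('n) * log 2 Q" .
  have n0: "0 < real CARD('n)" by simp
  have "1 / (2 * real CARD('n)) * log 2 \<bar>det M\<bar> = log 2 (det M) / (2 * real CARD('n))"
    using dM by simp
  also have "\<dots> \<le> (real CARD('n) * log 2 Q) / (2 * real CARD('n))"
    using L n0 by (intro divide_right_mono) auto
  also have "\<dots> = 1/2 * log 2 Q" using n0 by simp
  finally show ?thesis unfolding M_def Q_def .
qed

theorem lemma2: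
  fixes Kxx :: "real^'n^'n" and d :: real
  assumes "psd_matrix Kxx" and "d > 0"
  shows "(\<forall>A :: real^'n^'n. integer_matrix A \<and> rank A = CARD('n) \<longrightarrow>
            1/2 * log 2 (Max (range (\<lambda>k. row k A \<bullet> ((mat 1 + (1/d) *\<^sub>R Kxx) *v row k A))))
            \<ge> 1 / (2 * real CARD('n)) * log 2 \<bar>det (mat 1 + (1/d) *\<^sub>R Kxx)\<bar>)
         \<and> R_IF Kxx d \<ge> R_bench_BT Kxx d"
proof
  show P: "\<forall>A :: real^'n^'n. integer_matrix A \<and> rank A = CARD('n) \<longrightarrow>
            1/2 * log 2 (Max (range (\<lambda>k. row k A \<bullet> ((mat 1 + (1/d) *\<^sub>R Kxx) *v row k A))))
            \<ge> 1 / (2 * real CARD('n)) * log 2 \<bar>det (mat 1 + (1/d) *\<^sub>R Kxx)\<bar>"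
    using main_ineq[OF assms] by blast
  have I: "integer_matrix (mat 1 :: real^'n^'n)"
    by (simp add: integer_matrix_def mat_def)
  show "R_IF Kxx d \<ge> R_bench_BT Kxx d"
    unfolding R_IF_def R_bench_BT_def
  proof (rule cInf_greatest)
    show "{if_rate_A Kxx d A |A. integer_matrix A \<and> rank A = CARD('n)} \<noteq> {}"
      using I rank_I by blast
  next
    fix x assume "x \<in> {if_rate_A Kxx d A |A. integer_matrix A \<and> rank A = CARD('n)}"
    then show "1 / (2 * real CARD('n)) * log 2 \<bar>det (mat 1 + (1/d) *\<^sub>R Kxx)\<bar> \<le> x"
      using P unfolding if_rate_A_def by blast
  qed
qed

end
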